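(* For all $t\ge1$, $r\in[-1,1]$ and $w\in\mathbb{R}^3\setminus\{0\}$ we have $\kappa(a_tu_rw)\ge 1$ if $\kappa(w)\ge e^{-2t}$, and $\kappa(a_tu_rw)\ge e^{2t}\kappa(w)$ if $\kappa(w)<e^{-2t}$. Furthermore, if $\kappa(a_tu_rw)<1$ then $\kappa(a_tu_rw)=e^{2t}\kappa(w)$.
   Context: $Q_0(v)=v_2^2-2v_1v_3$, $a_t=\mathrm{diag}(e^t,1,e^{-t})$, $u_r=\begin{pmatrix}1&r&r^2/2\\0&1&r\\0&0&1\end{pmatrix}$. For $w=(w_1,w_2,w_3)\ne0$: if $w_2=w_3=0$, set $\rho(w)=\infty$, $\kappa_0(w)=\infty$, $\kappa(w)=1$. Otherwise $\rho(w)=-w_2/w_3\in[-\infty,\infty]$, $\kappa_0(w)=Q_0(w)/w_3^2\in[-\infty,\infty]$, and $\kappa(w)=|\kappa_0(w)|$ if $|\kappa_0(w)|<1$ and $|\rho(w)|<2$, while $\kappa(w)=1$ otherwise. *)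

theory Defs
  imports "HOL-Analysis.Analysis" "HOL-Library.Extended_Real"
begin

definition Q0 :: "real^3 \<Rightarrow> real" where
  "Q0 v = (v$2)^2 - 2 * (v$1) * (v$3)"

definition a_mat :: "real \<Rightarrow> real^3^3" where
  "a_mat t = vector [vector [exp t, 0, 0], vector [0, 1, 0], vector [0, 0, exp (-t)]]"

definition u_mat :: "real \<Rightarrow> real^3^3" where
  "u_mat r = vector [vector [1, r, r^2/2], vector [0, 1, r], vector [0, 0, 1]]"

text \<open>rho w = -w2/w3 in the extended reals; for w3 = 0 it is infinite
  (the point at infinity; only its absolute value is used).\<close>
definition rho :: "real^3 \<Rightarrow> ereal" where
  "rho w = (if w$3 = 0 then \<infinity> else ereal (- (w$2) / (w$3)))"

text \<open>kappa0 w = Q0(w)/w3^2; for w3 = 0 (w2 nonzero) Q0(w) = w2^2 > 0, so it is +infinity;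
  for w2 = w3 = 0 it is set to infinity by definition.\<close>
definition kappa0 :: "real^3 \<Rightarrow> ereal" where
  "kappa0 w = (if w$3 = 0 then \<infinity> else ereal (Q0 w / (w$3)^2))"

definition kappa :: "real^3 \<Rightarrow> real" where
  "kappa w = (if (w$2 = 0 \<and> w$3 = 0) then 1
              else if \<bar>kappa0 w\<bar> < 1 \<and> \<bar>rho w\<bar> < 2 then real_of_ereal \<bar>kappa0 w\<bar> else 1)"

end

theory Submission
  imports Defs
begin

lemma kappa_w3_0: "w$3 = 0 \<Longrightarrow> kappa w = 1"
  by (simp add: kappa_def kappa0_def)

lemma kappa_w3: "w$3 \<noteq> 0 \<Longrightarrow> kappa w = (if \<bar>Q0 w / (w$3)^2\<bar> < 1 \<and> \<bar>-(w$2)/w$3\<bar> < 2 then \<bar>Q0 w / (w$3)^2\<bar> else 1)"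
  by (simp add: kappa_def kappa0_def rho_def)

lemma comps:
  fixes w :: "real^3"
  shows "(a_mat t *v (u_mat r *v w))$3 = exp (-t) * w$3"
    "(a_mat t *v (u_mat r *v w))$2 = w$2 + r * w$3"
    "Q0 (a_mat t *v (u_mat r *v w)) = Q0 w"
  by (simp_all add: a_mat_def u_mat_def matrix_vector_mult_def sum_3 Q0_def algebra_simps power2_eq_square exp_minus field_simps)

theorem lemma3p7:
  fixes t r :: real and w :: "real^3"
  assumes "t \<ge> 1" and "r \<in> {-1..1}" and "w \<noteq> 0"
  shows "(kappa w \<ge> exp (-2*t) \<longrightarrow> kappa (a_mat t *v (u_mat r *v w)) \<ge> 1)
       \<and> (kappa w < exp (-2*t) \<longrightarrow> kappa (a_mat t *v (u_mat r *v w)) \<ge> exp (2*t) * kappa w)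
       \<and> (kappa (a_mat t *v (u_mat r *v w)) < 1 \<longrightarrow> kappa (a_mat t *v (u_mat r *v w)) = exp (2*t) * kappa w)"
proof (cases "w$3 = 0")
  case True
  then show ?thesis using comps[of t r w] kappa_w3_0 by auto
next
  case False
  define w' where "w' = a_mat t *v (u_mat r *v w)"
  define k where "k = Q0 w / (w$3)^2"
  define \<rho> where "\<rho> = -(w$2)/w$3"
  have e3: "w'$3 \<noteq> 0" using False comps[of t r w] by (simp add: w'_def)
  have k': "Q0 w' / (w'$3)^2 = exp (2*t) * k"
  proof -
    have "w'$3 = exp (-t) * w$3" "Q0 w' = Q0 w" using comps[of t r w] by (simp_all add: w'_def)
    moreover have "exp (2*t) = exp t ^ 2" by (simp add: power2_eq_square flip: exp_add)
    moreover have "w$3 = exp t * w'$3" using calculation(1) by (simp add: exp_minus)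
    ultimately show ?thesis using False by (simp add: k_def power_mult_distrib)
  qed
  have r': "-(w'$2)/w'$3 = exp t * (\<rho> - r)"
  proof -
    have "w'$3 = exp (-t) * w$3" "w'$2 = w$2 + r * w$3" using comps[of t r w] by (simp_all add: w'_def)
    moreover have "exp (-t) * exp t = 1" by (simp flip: exp_add)
    ultimately show ?thesis using False
      by (simp add: \<rho>_def divide_simps) (simp add: algebra_simps)
  qed
  have kw: "kappa w = (if \<bar>k\<bar> < 1 \<and> \<bar>\<rho>\<bar> < 2 then \<bar>k\<bar> else 1)"
    using kappa_w3[OF False] by (simp add: k_def \<rho>_def)
  have kw': "kappa w' = (if \<bar>exp (2*t) * k\<bar> < 1 \<and> \<bar>exp t * (\<rho> - r)\<bar> < 2 then \<bar>exp (2*t) * k\<bar> else 1)"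
    using kappa_w3[OF e3] unfolding k' r' by simp
  have et: "exp t \<ge> 2" using assms(1) exp_ge_add_one_self[of t] by linarith
  have e2t: "exp (2*t) \<ge> 1" using assms(1) by simp
  have inv: "exp (2*t) * exp (-2*t) = 1" by (simp flip: exp_add)
  have c3: "kappa w' < 1 \<Longrightarrow> kappa w' = exp (2*t) * kappa w"
  proof -
    assume h: "kappa w' < 1"
    then have a: "\<bar>exp (2*t) * k\<bar> < 1" and b: "\<bar>exp t * (\<rho> - r)\<bar> < 2"
      using kw' by (auto split: if_splits)
    have "\<bar>k\<bar> \<le> \<bar>exp (2*t) * k\<bar>" using e2t by (simp add: abs_mult mult_le_cancel_right1)
    hence k1: "\<bar>k\<bar> < 1" using a by linarith
    have "2 * \<bar>\<rho> - r\<bar> \<le> exp t * \<bar>\<rho> - r\<bar>" using et by (simp add: mult_right_mono)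
    hence "\<bar>\<rho> - r\<bar> < 1" using b by (simp add: abs_mult)
    hence "\<bar>\<rho>\<bar> < 2" using assms(2) by auto
    thus ?thesis using k1 kw kw' a b by (simp add: abs_mult)
  qed
  have nn: "kappa w \<ge> 0" "kappa w' \<le> 1" using kw kw' by auto
  have "exp (2*t) * kappa w < 1" if "kappa w < exp (-2*t)"
  proof -
    have "exp (2*t) * kappa w < exp (2*t) * exp (-2*t)" using that by (intro mult_strict_left_mono) auto
    thus ?thesis using inv by linarith
  qed
  moreover have "exp (2*t) * kappa w \<ge> 1" if "kappa w \<ge> exp (-2*t)"
  proof -
    have "exp (2*t) * kappa w \<ge> exp (2*t) * exp (-2*t)" using that by (intro mult_left_mono) auto
    thus ?thesis using inv by linarith
  qed
  ultimately show ?thesis using c3 nn unfolding w'_def[symmetric]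
    by (smt (verit))
qed

end
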